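(* The set of properties consisting of $EV$ (the even permutations) and $EL$ (the permutations of even length) is query-complete.
   Context: For $\sigma\in S_m$ and nonempty permutations $\alpha_1,\dots,\alpha_m$, the inflation $\sigma[\alpha_1,\dots,\alpha_m]$ is the permutation obtained by replacing each entry $\sigma(i)$ by an interval (contiguous positions, consecutive values) order-isomorphic to $\alpha_i$. A property is any set of permutations. A set $\mathcal{P}$ of properties is query-complete if for every permutation $\sigma\in S_m$ and every $P\in\mathcal{P}$, whether $\sigma[\alpha_1,\dots,\alpha_m]\in P$ is determined by $\sigma$ together with the knowledge, for each $i\in[m]$ and each $Q\in\mathcal{P}$, of whether $\alpha_i\in Q$. *)

theory Defs
  imports "HOL-Combinatorics.Permutations"
begin

definition is_perm :: "nat list \<Rightarrow> bool" where
  "is_perm p \<longleftrightarrow> distinct p \<and> set p = {0..<length p}"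

definition perm_fun :: "nat list \<Rightarrow> nat \<Rightarrow> nat" where
  "perm_fun p i = (if i < length p then p ! i else i)"

text \<open>Inflation sigma[alpha_1,...,alpha_m]: block i holds alpha_i shifted by the total
length of the blocks alpha_j with sigma(j) < sigma(i).\<close>
definition inflate :: "nat list \<Rightarrow> nat list list \<Rightarrow> nat list" where
  "inflate \<sigma> \<alpha>s = concat (map (\<lambda>i. map (\<lambda>x. x +
      sum_list (map (\<lambda>j. length (\<alpha>s ! j)) (filter (\<lambda>j. \<sigma> ! j < \<sigma> ! i) [0..<length \<sigma>])))
      (\<alpha>s ! i)) [0..<length \<sigma>])"

definition EV :: "nat list set" where
  "EV = {p. is_perm p \<and> evenperm (perm_fun p)}"

definition EL :: "nat list set" where
  "EL = {p. is_perm p \<and> even (length p)}"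

definition query_complete :: "nat list set set \<Rightarrow> bool" where
  "query_complete \<P> \<longleftrightarrow>
    (\<forall>\<sigma> \<alpha>s \<beta>s. is_perm \<sigma> \<and> length \<alpha>s = length \<sigma> \<and> length \<beta>s = length \<sigma>
      \<and> (\<forall>i<length \<sigma>. is_perm (\<alpha>s ! i) \<and> \<alpha>s ! i \<noteq> [] \<and> is_perm (\<beta>s ! i) \<and> \<beta>s ! i \<noteq> [])
      \<and> (\<forall>i<length \<sigma>. \<forall>Q\<in>\<P>. (\<alpha>s ! i \<in> Q \<longleftrightarrow> \<beta>s ! i \<in> Q))
      \<longrightarrow> (\<forall>P\<in>\<P>. (inflate \<sigma> \<alpha>s \<in> P \<longleftrightarrow> inflate \<sigma> \<beta>s \<in> P)))"

end

theory Submission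
  imports Defs
begin

fun ninv :: "nat list \<Rightarrow> nat" where
  "ninv [] = 0"
| "ninv (x # xs) = length (filter (\<lambda>y. y < x) xs) + ninv xs"

definition cross :: "nat list \<Rightarrow> nat list \<Rightarrow> nat" where
  "cross xs ys = sum_list (map (\<lambda>x. length (filter (\<lambda>y. y < x) ys)) xs)"

lemma cross_Nil [simp]: "cross [] ys = 0" by (simp add: cross_def)
lemma cross_Cons [simp]: "cross (x # xs) ys = length (filter (\<lambda>y. y < x) ys) + cross xs ys"
  by (simp add: cross_def)

lemma ninv_append: "ninv (xs @ ys) = ninv xs + ninv ys + cross xs ys"
  by (induction xs) auto

lemma cross_append2: "cross xs (ys @ zs) = cross xs ys + cross xs zs"
  by (induction xs) auto

lemma cross_swap2: "cross xs (a # b # ys) = cross xs (b # a # ys)"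
  by (induction xs) auto

lemma ninv_swap:
  assumes "b < a"
  shows "ninv (xs @ a # b # ys) = Suc (ninv (xs @ b # a # ys))"
  using assms by (simp add: ninv_append cross_swap2)

lemma perm_fun_swap:
  "perm_fun (xs @ b # a # ys) = perm_fun (xs @ a # b # ys) \<circ> Transposition.transpose (length xs) (Suc (length xs))"
proof
  fix k
  show "perm_fun (xs @ b # a # ys) k = (perm_fun (xs @ a # b # ys) \<circ> Transposition.transpose (length xs) (Suc (length xs))) k"
  proof (cases "k < length xs")
    case True then show ?thesis by (simp add: perm_fun_def nth_append transpose_def)
  next
    case False
    then consider "k = length xs" | "k = Suc (length xs)" | j where "k = Suc (Suc (length xs)) + j"
      by (metis add_Suc_shift add_Suc less_imp_Suc_add linorder_neqE_nat not_less_eq)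
    then show ?thesis
      by cases (auto simp: perm_fun_def nth_append transpose_def)
  qed
qed

lemma permutation_perm_fun:
  assumes "is_perm p" shows "permutation (perm_fun p)"
proof -
  have "bij_betw ((!) p) {..<length p} (set p)"
    using assms by (intro bij_betw_nth) (auto simp: is_perm_def)
  then have "bij_betw (perm_fun p) {..<length p} {..<length p}"
    using assms unfolding is_perm_def
    by (auto simp: perm_fun_def atLeast0LessThan intro: bij_betw_cong[THEN iffD1])
  then have "perm_fun p permutes {..<length p}"
    by (rule bij_imp_permutes) (auto simp: perm_fun_def)
  then show ?thesis by (rule permutes_imp_permutation[rotated]) simp
qed

lemma ninv_sorted: "sorted xs \<Longrightarrow> ninv xs = 0"
proof (induction xs)
  case (Cons x xs)
  then have "filter (\<lambda>y. y < x) xs = []" by (auto simp: filter_empty_conv)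
  then show ?case using Cons by simp
qed simp

lemma evenperm_ninv:
  "is_perm p \<Longrightarrow> evenperm (perm_fun p) \<longleftrightarrow> even (ninv p)"
proof (induction "ninv p" arbitrary: p rule: less_induct)
  case less
  show ?case
  proof (cases "\<exists>i. Suc i < length p \<and> p ! Suc i < p ! i")
    case True
    then obtain i where i: "Suc i < length p" "p ! Suc i < p ! i" by blast
    define xs where "xs = take i p"
    define ys where "ys = drop (Suc (Suc i)) p"
    define a where "a = p ! i"
    define b where "b = p ! Suc i"
    have p: "p = xs @ a # b # ys"
      unfolding xs_def ys_def a_def b_def using i
      by (simp add: Cons_nth_drop_Suc)
    have lx: "length xs = i" using i by (simp add: xs_def)
    have ba: "b < a" using i by (simp add: a_def b_def)
    define q where "q = xs @ b # a # ys"
    have nq: "ninv p = Suc (ninv q)" using ninv_swap[OF ba] p q_def by simp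
    have pq: "is_perm q" using less.prems p unfolding q_def is_perm_def by auto
    have IH: "evenperm (perm_fun q) \<longleftrightarrow> even (ninv q)"
      using less.hyps[of q] nq pq by simp
    have fq: "perm_fun q = perm_fun p \<circ> Transposition.transpose i (Suc i)"
    proof -
      have "perm_fun q = perm_fun (xs @ a # b # ys) \<circ> Transposition.transpose (length xs) (Suc (length xs))"
        unfolding q_def by (rule perm_fun_swap)
      then show ?thesis using lx p by metis
    qed
    have "evenperm (perm_fun q) = (evenperm (perm_fun p) = evenperm (Transposition.transpose i (Suc i)))"
      unfolding fq
      by (rule evenperm_comp[OF permutation_perm_fun[OF less.prems] permutation_swap_id])
    then show ?thesis using IH nq by (simp add: evenperm_swap)
  next
    case False
    then have s: "sorted p" unfolding sorted_iff_nth_Suc by (meson not_less)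
    have "p = [0..<length p]"
      using less.prems s by (intro sorted_distinct_set_unique) (auto simp: is_perm_def)
    then have "perm_fun p = id"
      by (auto simp: perm_fun_def fun_eq_iff) (metis nth_upt add_0)
    then show ?thesis using ninv_sorted[OF s] by simp
  qed
qed

lemma cross_concat_par:
  "length ls = length ls' \<Longrightarrow> (\<forall>k<length ls. even (cross l (ls!k)) = even (cross l' (ls'!k)))
   \<Longrightarrow> even (cross l (concat ls)) = even (cross l' (concat ls'))"
proof (induction ls arbitrary: ls')
  case Nil then show ?case by (simp add: cross_def)
next
  case (Cons x xs)
  then obtain y ys where ls': "ls' = y # ys" by (cases ls') auto
  have "even (cross l (concat xs)) = even (cross l' (concat ys))"
    using Cons.prems ls' by (intro Cons.IH) auto
  moreover have "even (cross l x) = even (cross l' y)" using Cons.prems(2) ls' by force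
  ultimately show ?case using ls' by (simp add: cross_append2)
qed

lemma ninv_concat_par:
  "length ls = length ls' \<Longrightarrow> (\<forall>k<length ls. even (ninv (ls!k)) = even (ninv (ls'!k)))
   \<Longrightarrow> (\<forall>k l. k < l \<and> l < length ls \<longrightarrow> even (cross (ls!k) (ls!l)) = even (cross (ls'!k) (ls'!l)))
   \<Longrightarrow> even (ninv (concat ls)) = even (ninv (concat ls'))"
proof (induction ls arbitrary: ls')
  case Nil then show ?case by simp
next
  case (Cons x xs)
  then obtain y ys where ls': "ls' = y # ys" by (cases ls') auto
  have "even (ninv (concat xs)) = even (ninv (concat ys))"
  proof (rule Cons.IH)
    show "length xs = length ys" using Cons.prems ls' by simp
    show "\<forall>k<length xs. even (ninv (xs ! k)) = even (ninv (ys ! k))"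
      using Cons.prems(2) ls' by force
    show "\<forall>k l. k < l \<and> l < length xs \<longrightarrow> even (cross (xs ! k) (xs ! l)) = even (cross (ys ! k) (ys ! l))"
    proof (intro allI impI)
      fix k l assume "k < l \<and> l < length xs"
      then show "even (cross (xs ! k) (xs ! l)) = even (cross (ys ! k) (ys ! l))"
        using Cons.prems(3)[rule_format, of "Suc k" "Suc l"] ls' by simp
    qed
  qed
  moreover have "even (ninv x) = even (ninv y)" using Cons.prems(2) ls' by force
  moreover have "even (cross x (concat xs)) = even (cross y (concat ys))"
  proof (rule cross_concat_par)
    show "length xs = length ys" using Cons.prems ls' by simp
    show "\<forall>k<length xs. even (cross x (xs ! k)) = even (cross y (ys ! k))"
    proof (intro allI impI)
      fix k assume "k < length xs"
      then show "even (cross x (xs ! k)) = even (cross y (ys ! k))"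
        using Cons.prems(3)[rule_format, of 0 "Suc k"] ls' by simp
    qed
  qed
  ultimately show ?case using ls' by (simp add: ninv_append)
qed

lemma ninv_shift: "ninv (map (\<lambda>x. x + c) xs) = ninv xs"
  by (induction xs) (auto simp: filter_map o_def)

lemma cross_all_gt: "(\<forall>x\<in>set xs. \<forall>y\<in>set ys. y < x) \<Longrightarrow> cross xs ys = length xs * length ys"
  by (induction xs) auto

lemma cross_all_le: "(\<forall>x\<in>set xs. \<forall>y\<in>set ys. x \<le> y) \<Longrightarrow> cross xs ys = 0"
proof (induction xs)
  case (Cons x xs)
  then have "filter (\<lambda>y. y < x) ys = []" by (auto simp: filter_empty_conv)
  then show ?case using Cons by simp
qed simp

definition off :: "nat list \<Rightarrow> nat list list \<Rightarrow> nat \<Rightarrow> nat" where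
  "off \<sigma> \<alpha>s i = sum_list (map (\<lambda>j. length (\<alpha>s ! j)) (filter (\<lambda>j. \<sigma> ! j < \<sigma> ! i) [0..<length \<sigma>]))"

definition blk :: "nat list \<Rightarrow> nat list list \<Rightarrow> nat \<Rightarrow> nat list" where
  "blk \<sigma> \<alpha>s i = map (\<lambda>x. x + off \<sigma> \<alpha>s i) (\<alpha>s ! i)"

lemma inflate_blk: "inflate \<sigma> \<alpha>s = concat (map (blk \<sigma> \<alpha>s) [0..<length \<sigma>])"
  unfolding inflate_def by (intro arg_cong[where f=concat] map_cong) (simp_all add: blk_def off_def)

lemma off_sum: "off \<sigma> \<alpha>s i = (\<Sum>j\<in>{j. j < length \<sigma> \<and> \<sigma> ! j < \<sigma> ! i}. length (\<alpha>s ! j))"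
proof -
  have "set (filter (\<lambda>j. \<sigma> ! j < \<sigma> ! i) [0..<length \<sigma>]) = {j. j < length \<sigma> \<and> \<sigma> ! j < \<sigma> ! i}"
    by auto
  then show ?thesis unfolding off_def
    by (metis (no_types, lifting) distinct_filter distinct_upt sum_list_distinct_conv_sum_set)
qed

lemma off_lt:
  assumes "j < length \<sigma>" "\<sigma> ! j < \<sigma> ! i"
  shows "off \<sigma> \<alpha>s j + length (\<alpha>s ! j) \<le> off \<sigma> \<alpha>s i"
proof -
  let ?A = "{k. k < length \<sigma> \<and> \<sigma> ! k < \<sigma> ! j}"
  let ?B = "{k. k < length \<sigma> \<and> \<sigma> ! k < \<sigma> ! i}"
  have "off \<sigma> \<alpha>s j + length (\<alpha>s ! j) = (\<Sum>k\<in>insert j ?A. length (\<alpha>s ! k))"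
    by (simp add: off_sum)
  also have "\<dots> \<le> (\<Sum>k\<in>?B. length (\<alpha>s ! k))"
    using assms by (intro sum_mono2) auto
  finally show ?thesis by (simp add: off_sum)
qed

lemma off_le:
  assumes "i < length \<sigma>"
  shows "off \<sigma> \<alpha>s i + length (\<alpha>s ! i) \<le> (\<Sum>k<length \<sigma>. length (\<alpha>s ! k))"
proof -
  let ?A = "{k. k < length \<sigma> \<and> \<sigma> ! k < \<sigma> ! i}"
  have "off \<sigma> \<alpha>s i + length (\<alpha>s ! i) = (\<Sum>k\<in>insert i ?A. length (\<alpha>s ! k))"
    by (simp add: off_sum)
  also have "\<dots> \<le> (\<Sum>k<length \<sigma>. length (\<alpha>s ! k))"
    using assms by (intro sum_mono2) auto
  finally show ?thesis .
qed

lemma blk_range: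
  assumes "is_perm (\<alpha>s ! i)" "x \<in> set (blk \<sigma> \<alpha>s i)"
  shows "off \<sigma> \<alpha>s i \<le> x \<and> x < off \<sigma> \<alpha>s i + length (\<alpha>s ! i)"
  using assms by (auto simp: blk_def is_perm_def)

lemma cross_blk:
  assumes "is_perm \<sigma>" "i < length \<sigma>" "j < length \<sigma>" "i \<noteq> j"
    "is_perm (\<alpha>s ! i)" "is_perm (\<alpha>s ! j)"
  shows "cross (blk \<sigma> \<alpha>s i) (blk \<sigma> \<alpha>s j) =
    (if \<sigma> ! j < \<sigma> ! i then length (\<alpha>s ! i) * length (\<alpha>s ! j) else 0)"
proof -
  have ne: "\<sigma> ! i \<noteq> \<sigma> ! j" using assms by (simp add: is_perm_def nth_eq_iff_index_eq)
  show ?thesis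
  proof (cases "\<sigma> ! j < \<sigma> ! i")
    case True
    have "off \<sigma> \<alpha>s j + length (\<alpha>s ! j) \<le> off \<sigma> \<alpha>s i" using off_lt[OF assms(3) True] .
    then have "cross (blk \<sigma> \<alpha>s i) (blk \<sigma> \<alpha>s j) = length (blk \<sigma> \<alpha>s i) * length (blk \<sigma> \<alpha>s j)"
      using blk_range[OF assms(5)] blk_range[OF assms(6)]
      by (intro cross_all_gt) (meson le_trans less_le_trans not_le)
    then show ?thesis using True by (simp add: blk_def)
  next
    case False
    then have lt: "\<sigma> ! i < \<sigma> ! j" using ne by simp
    have "off \<sigma> \<alpha>s i + length (\<alpha>s ! i) \<le> off \<sigma> \<alpha>s j" using off_lt[OF assms(2) lt] .
    then have "cross (blk \<sigma> \<alpha>s i) (blk \<sigma> \<alpha>s j) = 0"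
      using blk_range[OF assms(5)] blk_range[OF assms(6)]
      by (intro cross_all_le) (meson le_trans less_imp_le_nat less_le_trans)
    then show ?thesis using False by simp
  qed
qed

lemma length_inflate:
  "length (inflate \<sigma> \<alpha>s) = (\<Sum>k<length \<sigma>. length (\<alpha>s ! k))"
  by (simp add: inflate_blk length_concat blk_def o_def interv_sum_list_conv_sum_set_nat atLeast0LessThan)

lemma is_perm_inflate:
  assumes "is_perm \<sigma>" "\<forall>i<length \<sigma>. is_perm (\<alpha>s ! i) \<and> \<alpha>s ! i \<noteq> []"
  shows "is_perm (inflate \<sigma> \<alpha>s)"
proof -
  let ?ls = "map (blk \<sigma> \<alpha>s) [0..<length \<sigma>]"
  let ?N = "\<Sum>k<length \<sigma>. length (\<alpha>s ! k)"
  have disj: "set (blk \<sigma> \<alpha>s i) \<inter> set (blk \<sigma> \<alpha>s j) = {}"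
    if "i < length \<sigma>" "j < length \<sigma>" "i \<noteq> j" for i j
  proof -
    have ne: "\<sigma> ! i \<noteq> \<sigma> ! j" using assms that by (simp add: is_perm_def nth_eq_iff_index_eq)
    have pi: "is_perm (\<alpha>s ! i)" and pj: "is_perm (\<alpha>s ! j)" using assms that by auto
    show ?thesis
    proof (cases "\<sigma> ! j < \<sigma> ! i")
      case True
      then show ?thesis using off_lt[OF that(2) True, of \<alpha>s] blk_range[OF pi] blk_range[OF pj]
        by fastforce
    next
      case False
      then have lt: "\<sigma> ! i < \<sigma> ! j" using ne by simp
      then show ?thesis using off_lt[OF that(1) lt, of \<alpha>s] blk_range[OF pi] blk_range[OF pj]
        by fastforce
    qed
  qed
  have dls: "distinct ?ls"
  proof (subst distinct_conv_nth, intro allI impI)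
    fix i j assume ij: "i < length ?ls" "j < length ?ls" "i \<noteq> j"
    show "?ls ! i \<noteq> ?ls ! j"
    proof
      assume eq: "?ls ! i = ?ls ! j"
      have "set (blk \<sigma> \<alpha>s i) \<inter> set (blk \<sigma> \<alpha>s j) = {}" using disj ij by simp
      moreover have "blk \<sigma> \<alpha>s i = blk \<sigma> \<alpha>s j" using eq ij by simp
      moreover have "blk \<sigma> \<alpha>s i \<noteq> []" using assms ij by (simp add: blk_def)
      ultimately show False by simp
    qed
  qed
  have dist: "distinct (inflate \<sigma> \<alpha>s)"
    unfolding inflate_blk
  proof (rule distinct_concat[OF dls])
    fix ys assume "ys \<in> set ?ls"
    then show "distinct ys" using assms by (auto simp: blk_def is_perm_def distinct_map)
  next
    fix ys zs assume "ys \<in> set ?ls" "zs \<in> set ?ls" "ys \<noteq> zs"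
    then show "set ys \<inter> set zs = {}" using disj by auto (metis disjoint_iff)
  qed
  have sub: "set (inflate \<sigma> \<alpha>s) \<subseteq> {0..<?N}"
  proof
    fix x assume "x \<in> set (inflate \<sigma> \<alpha>s)"
    then obtain i where i: "i < length \<sigma>" "x \<in> set (blk \<sigma> \<alpha>s i)"
      unfolding inflate_blk by auto
    then show "x \<in> {0..<?N}" using blk_range[of \<alpha>s i x \<sigma>] off_le[OF i(1), of \<alpha>s] assms by auto
  qed
  have "card (set (inflate \<sigma> \<alpha>s)) = ?N" using dist by (simp add: distinct_card length_inflate)
  then have "set (inflate \<sigma> \<alpha>s) = {0..<?N}"
    using sub by (intro card_subset_eq) auto
  then show ?thesis using dist by (simp add: is_perm_def length_inflate)
qed

lemma even_sum_par:
  "(\<forall>k<(m::nat). even (f k) = even (g k)) \<Longrightarrow> even (\<Sum>k<m. (f k :: nat)) = even (\<Sum>k<m. g k)"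
  by (induction m) auto

theorem lemma4p3:
  shows "query_complete {EV, EL}"
  unfolding query_complete_def
proof (intro allI impI)
  fix \<sigma> :: "nat list" and \<alpha>s \<beta>s :: "nat list list"
  assume H: "is_perm \<sigma> \<and> length \<alpha>s = length \<sigma> \<and> length \<beta>s = length \<sigma>
      \<and> (\<forall>i<length \<sigma>. is_perm (\<alpha>s ! i) \<and> \<alpha>s ! i \<noteq> [] \<and> is_perm (\<beta>s ! i) \<and> \<beta>s ! i \<noteq> [])
      \<and> (\<forall>i<length \<sigma>. \<forall>Q\<in>{EV, EL}. (\<alpha>s ! i \<in> Q \<longleftrightarrow> \<beta>s ! i \<in> Q))"
  let ?m = "length \<sigma>"
  have s: "is_perm \<sigma>" using H by blast
  have pa: "\<And>i. i < ?m \<Longrightarrow> is_perm (\<alpha>s ! i)" and pb: "\<And>i. i < ?m \<Longrightarrow> is_perm (\<beta>s ! i)"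
    using H by blast+
  have len: "\<And>i. i < ?m \<Longrightarrow> even (length (\<alpha>s ! i)) = even (length (\<beta>s ! i))"
  proof -
    fix i assume i: "i < ?m"
    have "\<alpha>s ! i \<in> EL \<longleftrightarrow> \<beta>s ! i \<in> EL" using H i by blast
    then show "even (length (\<alpha>s ! i)) = even (length (\<beta>s ! i))"
      using pa[OF i] pb[OF i] by (simp add: EL_def)
  qed
  have ev: "\<And>i. i < ?m \<Longrightarrow> even (ninv (\<alpha>s ! i)) = even (ninv (\<beta>s ! i))"
  proof -
    fix i assume i: "i < ?m"
    have "\<alpha>s ! i \<in> EV \<longleftrightarrow> \<beta>s ! i \<in> EV" using H i by blast
    then show "even (ninv (\<alpha>s ! i)) = even (ninv (\<beta>s ! i))"
      using pa[OF i] pb[OF i] by (simp add: EV_def evenperm_ninv)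
  qed
  have IA: "is_perm (inflate \<sigma> \<alpha>s)" using H by (intro is_perm_inflate) auto
  have IB: "is_perm (inflate \<sigma> \<beta>s)" using H by (intro is_perm_inflate) auto
  have L: "even (length (inflate \<sigma> \<alpha>s)) = even (length (inflate \<sigma> \<beta>s))"
    unfolding length_inflate using len by (intro even_sum_par) auto
  have N: "even (ninv (inflate \<sigma> \<alpha>s)) = even (ninv (inflate \<sigma> \<beta>s))"
    unfolding inflate_blk
  proof (rule ninv_concat_par)
    show "length (map (blk \<sigma> \<alpha>s) [0..<?m]) = length (map (blk \<sigma> \<beta>s) [0..<?m])" by simp
    show "\<forall>k<length (map (blk \<sigma> \<alpha>s) [0..<?m]).
        even (ninv (map (blk \<sigma> \<alpha>s) [0..<?m] ! k)) = even (ninv (map (blk \<sigma> \<beta>s) [0..<?m] ! k))"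
      using ev by (simp add: blk_def ninv_shift)
    show "\<forall>k l. k < l \<and> l < length (map (blk \<sigma> \<alpha>s) [0..<?m]) \<longrightarrow>
        even (cross (map (blk \<sigma> \<alpha>s) [0..<?m] ! k) (map (blk \<sigma> \<alpha>s) [0..<?m] ! l)) =
        even (cross (map (blk \<sigma> \<beta>s) [0..<?m] ! k) (map (blk \<sigma> \<beta>s) [0..<?m] ! l))"
    proof (intro allI impI)
      fix k l assume kl: "k < l \<and> l < length (map (blk \<sigma> \<alpha>s) [0..<?m])"
      then have k: "k < ?m" and l: "l < ?m" and ne: "k \<noteq> l" by auto
      show "even (cross (map (blk \<sigma> \<alpha>s) [0..<?m] ! k) (map (blk \<sigma> \<alpha>s) [0..<?m] ! l)) =
        even (cross (map (blk \<sigma> \<beta>s) [0..<?m] ! k) (map (blk \<sigma> \<beta>s) [0..<?m] ! l))"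
        using cross_blk[OF s k l ne pa[OF k] pa[OF l]] cross_blk[OF s k l ne pb[OF k] pb[OF l]]
          len[OF k] len[OF l] k l by simp
    qed
  qed
  show "\<forall>P\<in>{EV, EL}. (inflate \<sigma> \<alpha>s \<in> P) = (inflate \<sigma> \<beta>s \<in> P)"
    using IA IB L N by (simp add: EV_def EL_def evenperm_ninv)
qed

end
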